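(* Let $n=7$, let $\mathcal{P}_0=\{p_{135},p_{147},p_{16},p_{23},p_{246},p_{257},p_{367},p_{45}\}$, where $p_{ijk}$ (resp. $p_{ij}$) is declared incident exactly to $l_i,l_j,l_k$ (resp. $l_i,l_j$) among $l_1,\dots,l_7$, and let $\mathcal{A}=\{(i,p)\in\{1,\dots,7\}\times\mathcal{P}_0: p\prec l_i\}$. Let $H$ be the free abelian group with basis $x_1,\dots,x_7$, $A=H^{\mathcal{A}}$, $S_p=\sum_{j:\,p\prec l_j}x_j$. Let $U\subseteq A$ be the subgroup generated by: $a^{(0)}_{i,p}$ for $(i,p)\in\mathcal{A}$, $a^{(0)}_{i,p}(j,q)=\delta_{i,j}\delta_{p,q}x_i$; $a^{(1)}_{i,p}$ for $i\in\{1,\dots,7\}$, $p\in\mathcal{P}_0$, $a^{(1)}_{i,p}(j,q)=\delta_{p,q}x_i$; $a^{(2)}_{i,p_1,p_2}$ for $i\in\{1,\dots,7\}$, $p_1,p_2\in\mathcal{P}_0$ both incident to $l_i$, $a^{(2)}_{i,p_1,p_2}(j,q)=\delta_{i,j}\delta_{p_1,q}S_{p_2}$. Let $B\subseteq A$ be the subgroup of maps $a$ with $a(i,p)=a(i,q)$ whenever $(i,p),(i,q)\in\mathcal{A}$. Let $a_0\in A$ be the map with $a_0(4,p_{45})=x_7-x_6-x_3$, $a_0(2,p_{23})=-x_5$, $a_0(6,p_{246})=-x_7$, and $a_0(i,p)=0$ for all other $(i,p)\in\mathcal{A}$. Then the image of $a_0$ in $W=A/(U+B)$ is non-zero.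
   Context: This is the MacLane configuration $C_8$ (affine plane over $\mathbb{F}_3$ with one point deleted), with lines $l_0,\dots,l_7$ and points $p_{012},p_{034},p_{056},p_{07},p_{135},p_{147},p_{16},p_{23},p_{246},p_{257},p_{367},p_{45}$, where $p_{ijk}$ is incident exactly to $l_i,l_j,l_k$ and $p_{ij}$ exactly to $l_i,l_j$; $\mathcal{P}_0$ is the set of points not on $l_0$. *)

theory Defs
  imports Main "HOL-Library.Function_Algebras"
begin

text \<open>The eight points of P0 (points not on l_0) of the MacLane configuration C_8.\<close>
datatype pt = P135 | P147 | P16 | P23 | P246 | P257 | P367 | P45

fun inc :: "pt \<Rightarrow> nat \<Rightarrow> bool" where
  "inc P135 i = (i \<in> {1,3,5})"
| "inc P147 i = (i \<in> {1,4,7})"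
| "inc P16 i = (i \<in> {1,6})"
| "inc P23 i = (i \<in> {2,3})"
| "inc P246 i = (i \<in> {2,4,6})"
| "inc P257 i = (i \<in> {2,5,7})"
| "inc P367 i = (i \<in> {3,6,7})"
| "inc P45 i = (i \<in> {4,5})"

definition calA :: "(nat \<times> pt) set" where
  "calA = {(i,p). i \<in> {1..7} \<and> inc p i}"

text \<open>H = free abelian group on x_1..x_7, elements are integer coefficient vectors
  (nat \<Rightarrow> int) supported in {1..7}.\<close>
definition Hset :: "(nat \<Rightarrow> int) set" where
  "Hset = {h. \<forall>k. k \<notin> {1..7} \<longrightarrow> h k = 0}"

definition xv :: "nat \<Rightarrow> nat \<Rightarrow> int" where
  "xv i = (\<lambda>k. if k = i then 1 else 0)"

definition S :: "pt \<Rightarrow> nat \<Rightarrow> int" where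
  "S p = (\<Sum>j\<in>{j \<in> {1..7}. inc p j}. xv j)"

text \<open>A = H^calA: maps (i,p) \<mapsto> element of H, represented as functions vanishing outside calA.\<close>
type_synonym elemA = "nat \<Rightarrow> pt \<Rightarrow> nat \<Rightarrow> int"

definition Aset :: "elemA set" where
  "Aset = {a. (\<forall>i p. (i,p) \<in> calA \<longrightarrow> a i p \<in> Hset) \<and> (\<forall>i p. (i,p) \<notin> calA \<longrightarrow> a i p = 0)}"

definition add_subgroup :: "'a::ab_group_add set \<Rightarrow> bool" where
  "add_subgroup G \<longleftrightarrow> 0 \<in> G \<and> (\<forall>x\<in>G. \<forall>y\<in>G. x - y \<in> G)"

definition gen_subgroup :: "'a::ab_group_add set \<Rightarrow> 'a set" where
  "gen_subgroup X = \<Inter>{G. add_subgroup G \<and> X \<subseteq> G}"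

definition gen0 :: "nat \<Rightarrow> pt \<Rightarrow> elemA" where
  "gen0 i p = (\<lambda>j q. if j = i \<and> q = p then xv i else 0)"

definition gen1 :: "nat \<Rightarrow> pt \<Rightarrow> elemA" where
  "gen1 i p = (\<lambda>j q. if (j,q) \<in> calA \<and> q = p then xv i else 0)"

definition gen2 :: "nat \<Rightarrow> pt \<Rightarrow> pt \<Rightarrow> elemA" where
  "gen2 i p1 p2 = (\<lambda>j q. if j = i \<and> q = p1 then S p2 else 0)"

definition Ugens :: "elemA set" where
  "Ugens = {gen0 i p | i p. (i,p) \<in> calA}
         \<union> {gen1 i p | i p. i \<in> {1..7}}
         \<union> {gen2 i p1 p2 | i p1 p2. i \<in> {1..7} \<and> inc p1 i \<and> inc p2 i}"

definition U :: "elemA set" where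
  "U = gen_subgroup Ugens"

definition B :: "elemA set" where
  "B = {a \<in> Aset. \<forall>i p q. (i,p) \<in> calA \<and> (i,q) \<in> calA \<longrightarrow> a i p = a i q}"

definition a0 :: elemA where
  "a0 = (\<lambda>i p. if (i,p) = (4,P45) then xv 7 - xv 6 - xv 3
              else if (i,p) = (2,P23) then - xv 5
              else if (i,p) = (6,P246) then - xv 7
              else 0)"

end

theory Submission
  imports Defs
begin

definition Lphi :: "(int \<times> nat \<times> pt \<times> pt \<times> nat) list" where
  "Lphi = [(1, 1, P135, P16, 2),
   (-1, 1, P135, P16, 3),
   (-1, 1, P135, P16, 4),
   (1, 1, P135, P16, 5),
   (1, 1, P135, P16, 7),
   (1, 2, P23, P246, 1),
   (1, 2, P23, P246, 4),
   (-1, 2, P23, P246, 5),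
   (-1, 2, P23, P246, 6),
   (1, 2, P23, P246, 7),
   (1, 3, P135, P23, 1),
   (1, 3, P135, P23, 4),
   (-1, 3, P135, P23, 5),
   (-1, 3, P135, P23, 6),
   (1, 3, P135, P23, 7),
   (1, 4, P246, P45, 1),
   (1, 4, P246, P45, 2),
   (-1, 4, P246, P45, 3),
   (-1, 4, P246, P45, 6),
   (-1, 4, P246, P45, 7),
   (-1, 5, P135, P45, 1),
   (-1, 5, P135, P45, 2),
   (1, 5, P135, P45, 3),
   (1, 5, P135, P45, 6),
   (1, 5, P135, P45, 7),
   (1, 6, P16, P246, 2),
   (-1, 6, P16, P246, 3),
   (-1, 6, P16, P246, 4),
   (1, 6, P16, P246, 5),
   (1, 6, P16, P246, 7)]"

definition phiL :: "(int \<times> nat \<times> pt \<times> pt \<times> nat) list \<Rightarrow> elemA \<Rightarrow> int" where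
  "phiL L a = sum_list (map (\<lambda>(c,i,p,q,k). c * (a i p k - a i q k)) L)"

definition phi :: "elemA \<Rightarrow> int" where
  "phi a = phiL Lphi a"

lemma phiL_add: "phiL L (x + y) = phiL L x + phiL L y"
  unfolding phiL_def by (induct L) (auto simp: algebra_simps)

lemma phiL_diff: "phiL L (x - y) = phiL L x - phiL L y"
  unfolding phiL_def by (induct L) (auto simp: algebra_simps)

lemma phiL_zero: "phiL L 0 = 0"
  unfolding phiL_def by (induct L) auto

lemma phiL_B: "(\<forall>(c,i,p,q,k)\<in>set L. a i p = a i q) \<Longrightarrow> phiL L a = 0"
  unfolding phiL_def by (induct L) auto

lemma phi_add: "phi (x + y) = phi x + phi y"
  unfolding phi_def by (rule phiL_add)

lemma phi_diff: "phi (x - y) = phi x - phi y"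
  unfolding phi_def by (rule phiL_diff)

lemma phi_zero: "phi 0 = 0"
  unfolding phi_def by (rule phiL_zero)

lemma phi_expand: "phi a = (a 1 P135 2 - a 1 P16 2) - (a 1 P135 3 - a 1 P16 3) - (a 1 P135 4 - a 1 P16 4) + (a 1 P135 5 - a 1 P16 5) + (a 1 P135 7 - a 1 P16 7) + (a 2 P23 1 - a 2 P246 1) + (a 2 P23 4 - a 2 P246 4) - (a 2 P23 5 - a 2 P246 5) - (a 2 P23 6 - a 2 P246 6) + (a 2 P23 7 - a 2 P246 7) + (a 3 P135 1 - a 3 P23 1) + (a 3 P135 4 - a 3 P23 4) - (a 3 P135 5 - a 3 P23 5) - (a 3 P135 6 - a 3 P23 6) + (a 3 P135 7 - a 3 P23 7) + (a 4 P246 1 - a 4 P45 1) + (a 4 P246 2 - a 4 P45 2) - (a 4 P246 3 - a 4 P45 3) - (a 4 P246 6 - a 4 P45 6) - (a 4 P246 7 - a 4 P45 7) - (a 5 P135 1 - a 5 P45 1) - (a 5 P135 2 - a 5 P45 2) + (a 5 P135 3 - a 5 P45 3) + (a 5 P135 6 - a 5 P45 6) + (a 5 P135 7 - a 5 P45 7) + (a 6 P16 2 - a 6 P246 2) - (a 6 P16 3 - a 6 P246 3) - (a 6 P16 4 - a 6 P246 4) + (a 6 P16 5 - a 6 P246 5) + (a 6 P16 7 - a 6 P246 7)"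
  unfolding phi_def phiL_def Lphi_def by simp

lemma sum_fun_app: "(\<Sum>j\<in>A. f j) (k::nat) = (\<Sum>j\<in>A. (f j k::int))"
  by (induct A rule: infinite_finite_induct) auto

lemma S_apply: "S p k = (if k \<in> {1..7} \<and> inc p k then 1 else 0)"
proof -
  have "S p k = (\<Sum>j\<in>{j \<in> {1..7}. inc p j}. xv j k)"
    unfolding S_def by (rule sum_fun_app)
  also have "\<dots> = (\<Sum>j\<in>{j \<in> {1..7}. inc p j}. if k = j then 1 else 0)"
    by (simp add: xv_def eq_commute)
  also have "\<dots> = (if k \<in> {1..7} \<and> inc p k then 1 else 0)"
    by (subst sum.delta') auto
  finally show ?thesis .
qed

lemma range7: "i \<in> {1..7} \<Longrightarrow> i = 1 \<or> i = 2 \<or> i = 3 \<or> i = 4 \<or> i = 5 \<or> i = 6 \<or> (i::nat) = 7"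
  by auto

lemma g0: "(i,p) \<in> calA \<Longrightarrow> 3 dvd phi (gen0 i p)"
  unfolding calA_def
  apply (simp only: mem_Collect_eq case_prod_conv)
  apply (elim conjE)
  apply (drule range7)
  apply (elim disjE; cases p; simp add: phi_expand gen0_def xv_def)
  done

lemma g1: "i \<in> {1..7} \<Longrightarrow> 3 dvd phi (gen1 i p)"
  apply (drule range7)
  apply (elim disjE; cases p; simp add: phi_expand gen1_def xv_def calA_def)
  done

lemma g2: "i \<in> {1..7} \<Longrightarrow> inc p1 i \<Longrightarrow> inc p2 i \<Longrightarrow> 3 dvd phi (gen2 i p1 p2)"
  apply (drule range7)
  apply (elim disjE; cases p1; simp; cases p2; simp add: phi_expand gen2_def S_apply xv_def)
  done

lemma U_dvd: "u \<in> U \<Longrightarrow> 3 dvd phi u"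
proof -
  have sg: "add_subgroup {x. 3 dvd phi x}"
    unfolding add_subgroup_def using phi_zero phi_diff by auto
  have "Ugens \<subseteq> {x. 3 dvd phi x}"
    unfolding Ugens_def using g0 g1 g2 by auto
  then have "U \<subseteq> {x. 3 dvd phi x}"
    unfolding U_def gen_subgroup_def using sg by auto
  then show "u \<in> U \<Longrightarrow> 3 dvd phi u" by auto
qed

lemma B_zero: "b \<in> B \<Longrightarrow> phi b = 0"
proof -
  assume "b \<in> B"
  then have h0: "\<forall>i p q. (i,p) \<in> calA \<and> (i,q) \<in> calA \<longrightarrow> b i p = b i q"
    unfolding B_def by blast
  have h: "b i p = b i q" if "(i,p) \<in> calA" "(i,q) \<in> calA" for i p q
    using h0 that by blast
  have c: "(1,P135) \<in> calA" "(1,P16) \<in> calA" "(2,P23) \<in> calA" "(2,P246) \<in> calA"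
    "(3,P135) \<in> calA" "(3,P23) \<in> calA" "(4,P246) \<in> calA" "(4,P45) \<in> calA"
    "(5,P135) \<in> calA" "(5,P45) \<in> calA" "(6,P16) \<in> calA" "(6,P246) \<in> calA"
    by (simp_all add: calA_def)
  have "b 1 P135 = b 1 P16" "b 2 P23 = b 2 P246" "b 3 P135 = b 3 P23"
    "b 4 P246 = b 4 P45" "b 5 P135 = b 5 P45" "b 6 P16 = b 6 P246"
    using h[OF c(1) c(2)] h[OF c(3) c(4)] h[OF c(5) c(6)] h[OF c(7) c(8)]
      h[OF c(9) c(10)] h[OF c(11) c(12)] by simp_all
  then show ?thesis unfolding phi_expand by simp
qed

lemma phi_a0: "phi a0 = 1"
  unfolding phi_expand a0_def by (simp add: xv_def)

theorem lemma3p2: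
  shows "a0 \<notin> {u + b | u b. u \<in> U \<and> b \<in> B}"
proof
  assume "a0 \<in> {u + b | u b. u \<in> U \<and> b \<in> B}"
  then obtain u b where "a0 = u + b" "u \<in> U" "b \<in> B" by auto
  then have "phi a0 = phi (u + b)" by simp
  then have "phi a0 = phi u + phi b" by (simp only: phi_add)
  then have "phi a0 = phi u" using B_zero \<open>b \<in> B\<close> by simp
  moreover have "3 dvd phi u" using U_dvd \<open>u \<in> U\<close> by blast
  ultimately have "(3::int) dvd 1" using phi_a0 by simp
  then show False by simp
qed

end
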